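(* Let $G$ be a finite, connected, simple graph with shortest-path metric $d$. Then $G$ is meshed if and only if for every metric triangle $vxy$ of $G$ with $d(x,y)=2$, we have $d(v,x)=d(v,y)=2$ and there exists a vertex $z$ adjacent to both $x$ and $y$ such that $d(v,z)=2$.
   Context: All graphs are finite, connected, undirected, without loops or multiple edges; $d$ denotes the shortest-path distance. The interval between vertices $u,w$ is $I(u,w)=\{x: d(u,x)+d(x,w)=d(u,w)\}$. Three vertices $x,y,z$ form a metric triangle $xyz$ if $I(x,y)\cap I(x,z)=\{x\}$, $I(x,y)\cap I(y,z)=\{y\}$ and $I(x,z)\cap I(y,z)=\{z\}$. A graph $G$ is meshed if for any three vertices $v,x,y$ with $d(x,y)=2$ there exists a common neighbor $z$ of $x$ and $y$ such that $2d(v,z)\le d(v,x)+d(v,y)$. *)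

theory Defs
  imports Main
begin

definition simple_graph :: "'a set \<Rightarrow> ('a \<Rightarrow> 'a \<Rightarrow> bool) \<Rightarrow> bool" where
  "simple_graph V E \<longleftrightarrow> finite V \<and> V \<noteq> {}
     \<and> (\<forall>x y. E x y \<longrightarrow> x \<in> V \<and> y \<in> V)
     \<and> (\<forall>x y. E x y \<longrightarrow> E y x) \<and> (\<forall>x. \<not> E x x)"

fun walk :: "'a set \<Rightarrow> ('a \<Rightarrow> 'a \<Rightarrow> bool) \<Rightarrow> 'a list \<Rightarrow> bool" where
  "walk V E [] = False"
| "walk V E [x] = (x \<in> V)"
| "walk V E (x # y # xs) = (x \<in> V \<and> E x y \<and> walk V E (y # xs))"

definition connected_graph :: "'a set \<Rightarrow> ('a \<Rightarrow> 'a \<Rightarrow> bool) \<Rightarrow> bool" where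
  "connected_graph V E \<longleftrightarrow>
     (\<forall>x\<in>V. \<forall>y\<in>V. \<exists>p. walk V E p \<and> hd p = x \<and> last p = y)"

definition gdist :: "'a set \<Rightarrow> ('a \<Rightarrow> 'a \<Rightarrow> bool) \<Rightarrow> 'a \<Rightarrow> 'a \<Rightarrow> nat" where
  "gdist V E x y = (LEAST n. \<exists>p. walk V E p \<and> hd p = x \<and> last p = y \<and> length p = Suc n)"

definition interval :: "'a set \<Rightarrow> ('a \<Rightarrow> 'a \<Rightarrow> bool) \<Rightarrow> 'a \<Rightarrow> 'a \<Rightarrow> 'a set" where
  "interval V E u w = {x \<in> V. gdist V E u x + gdist V E x w = gdist V E u w}"

definition metric_triangle :: "'a set \<Rightarrow> ('a \<Rightarrow> 'a \<Rightarrow> bool) \<Rightarrow> 'a \<Rightarrow> 'a \<Rightarrow> 'a \<Rightarrow> bool" where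
  "metric_triangle V E x y z \<longleftrightarrow> x \<in> V \<and> y \<in> V \<and> z \<in> V \<and>
     interval V E x y \<inter> interval V E x z = {x} \<and>
     interval V E x y \<inter> interval V E y z = {y} \<and>
     interval V E x z \<inter> interval V E y z = {z}"

definition meshed :: "'a set \<Rightarrow> ('a \<Rightarrow> 'a \<Rightarrow> bool) \<Rightarrow> bool" where
  "meshed V E \<longleftrightarrow> (\<forall>v\<in>V. \<forall>x\<in>V. \<forall>y\<in>V. gdist V E x y = 2 \<longrightarrow>
     (\<exists>z\<in>V. E x z \<and> E y z \<and> 2 * gdist V E v z \<le> gdist V E v x + gdist V E v y))"

end

theory Submission
  imports Defs
begin

lemma walk_ne: "walk V E p \<Longrightarrow> p \<noteq> []" by (cases p) auto

lemma walk_set: "walk V E p \<Longrightarrow> set p \<subseteq> V"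
  by (induction V E p rule: walk.induct) auto

lemma walk_Cons: "walk V E (x # p) \<longleftrightarrow> x \<in> V \<and> (p = [] \<or> (E x (hd p) \<and> walk V E p))"
  by (cases p) auto

lemma walk_append: "walk V E p \<Longrightarrow> walk V E q \<Longrightarrow> last p = hd q \<Longrightarrow> walk V E (p @ tl q)"
proof (induction p)
  case (Cons a p)
  show ?case
  proof (cases p)
    case Nil
    then show ?thesis using Cons by (cases q) auto
  next
    case (Cons b r)
    then show ?thesis using Cons.prems Cons.IH by (auto simp: walk_Cons)
  qed
qed simp

lemma walk_rev: "(\<And>x y. E x y \<Longrightarrow> E y x) \<Longrightarrow> walk V E p \<Longrightarrow> walk V E (rev p)"
proof (induction p)
  case (Cons a p)
  show ?case
  proof (cases p)
    case Nil
    then show ?thesis using Cons by auto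
  next
    case (Cons b r)
    have w: "walk V E (rev p)" using Cons.IH Cons.prems Cons by auto
    have "walk V E [b, a]" using Cons.prems Cons by (auto simp: walk_Cons)
    from walk_append[OF w this] show ?thesis using Cons by (simp add: last_rev)
  qed
qed simp

locale sgr = fixes V :: "'a set" and E
  assumes sg: "simple_graph V E" and cg: "connected_graph V E"
begin

abbreviation d where "d \<equiv> gdist V E"

lemma finV: "finite V" using sg by (simp add: simple_graph_def)
lemma EV: "E x y \<Longrightarrow> x \<in> V \<and> y \<in> V" using sg by (simp add: simple_graph_def)
lemma Esym: "E x y \<Longrightarrow> E y x" using sg by (simp add: simple_graph_def)
lemma Eirr: "\<not> E x x" using sg by (simp add: simple_graph_def)

lemma ex_walk: assumes "x \<in> V" "y \<in> V"
  shows "\<exists>p. walk V E p \<and> hd p = x \<and> last p = y \<and> length p = Suc (d x y)"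
proof -
  obtain p where p: "walk V E p" "hd p = x" "last p = y" using cg assms unfolding connected_graph_def by blast
  then have "length p = Suc (length p - 1)" using walk_ne by (cases p) auto
  then have "\<exists>n p. walk V E p \<and> hd p = x \<and> last p = y \<and> length p = Suc n" using p by blast
  from LeastI_ex[OF this] show ?thesis unfolding gdist_def by blast
qed

lemma dist_le: assumes "walk V E p" "hd p = x" "last p = y" shows "d x y \<le> length p - 1"
proof -
  have "length p = Suc (length p - 1)" using walk_ne assms by (cases p) auto
  then show ?thesis unfolding gdist_def using assms by (intro Least_le) metis
qed

lemma tri: assumes "x \<in> V" "y \<in> V" "z \<in> V" shows "d x z \<le> d x y + d y z"
proof -
  obtain p where p: "walk V E p" "hd p = x" "last p = y" "length p = Suc (d x y)" using ex_walk assms by blast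
  obtain q where q: "walk V E q" "hd q = y" "last q = z" "length q = Suc (d y z)" using ex_walk assms by blast
  have w: "walk V E (p @ tl q)" using walk_append[OF p(1) q(1)] p q by simp
  have "p \<noteq> []" using p(1) walk_ne by blast
  then have "hd (p @ tl q) = x" using p(2) by simp
  moreover have "last (p @ tl q) = z" using q p walk_ne
    by (cases q; cases "tl q") auto
  ultimately have "d x z \<le> length (p @ tl q) - 1" using dist_le w by blast
  then show ?thesis using p q by simp
qed

lemma dsym: assumes "x \<in> V" "y \<in> V" shows "d x y = d y x"
proof -
  have "d y x \<le> d x y" if xy: "x \<in> V" "y \<in> V" for x y
  proof -
    obtain p where p: "walk V E p" "hd p = x" "last p = y" "length p = Suc (d x y)" using ex_walk xy by blast
    have "walk V E (rev p)" using walk_rev[OF _ p(1)] Esym by blast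
    moreover have "hd (rev p) = y" "last (rev p) = x" using p walk_ne by (auto simp: hd_rev last_rev)
    ultimately show ?thesis using dist_le[of "rev p" y x] p by simp
  qed
  then show ?thesis using assms by (meson antisym)
qed

lemma d_refl: "x \<in> V \<Longrightarrow> d x x = 0"
  using dist_le[of "[x]" x x] by simp

lemma d0: assumes "x \<in> V" "y \<in> V" "d x y = 0" shows "x = y"
proof -
  obtain p where p: "walk V E p" "hd p = x" "last p = y" "length p = Suc (d x y)" using ex_walk assms by blast
  then obtain a where "p = [a]" using assms by (cases p) auto
  then show ?thesis using p by simp
qed

lemma dE: assumes "E x y" shows "d x y = 1"
proof -
  have "walk V E [x,y]" using assms EV by auto
  then have "d x y \<le> 1" using dist_le[of "[x,y]" x y] by simp
  moreover have "d x y \<noteq> 0" using d0 EV assms Eirr by metis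
  ultimately show ?thesis by simp
qed

lemma step: assumes "x \<in> V" "y \<in> V" "d x y = Suc n"
  shows "\<exists>x1. E x x1 \<and> d x1 y = n"
proof -
  obtain p where p: "walk V E p" "hd p = x" "last p = y" "length p = Suc (d x y)" using ex_walk assms by blast
  then obtain x1 r where pr: "p = x # x1 # r" using assms by (cases p; cases "tl p") auto
  have w: "walk V E (x1 # r)" "E x x1" using p pr by auto
  have "d x1 y \<le> n" using dist_le[OF w(1)] p pr assms by simp
  moreover have "d x y \<le> d x x1 + d x1 y" using tri assms EV w by blast
  ultimately show ?thesis using dE w assms by auto
qed

lemma d1: assumes "x \<in> V" "y \<in> V" "d x y = 1" shows "E x y"
proof -
  obtain x1 where "E x x1" "d x1 y = 0" using step[of x y 0] assms by auto
  then show ?thesis using d0 EV assms by metis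
qed

lemma d2: assumes "x \<in> V" "y \<in> V" "d x y = 2" shows "\<exists>z. E x z \<and> E z y"
proof -
  obtain x1 where "E x x1" "d x1 y = 1" using step[of x y 1] assms by auto
  then show ?thesis using d1 EV assms by blast
qed

lemma adj: assumes "v \<in> V" "E a b" shows "d v a \<le> Suc (d v b)"
proof -
  have "E b a" using Esym assms by blast
  then have "d b a = 1" by (rule dE)
  then show ?thesis using tri[of v b a] assms EV by auto
qed


lemma adj2: assumes "v \<in> V" "E a b" shows "d v b \<le> Suc (d v a)"
  using adj[of v b a] assms Esym by blast

lemma meshedD: assumes "meshed V E" "v \<in> V" "x \<in> V" "y \<in> V" "d x y = 2"
  shows "\<exists>z\<in>V. E x z \<and> E y z \<and> 2 * d v z \<le> d v x + d v y"
  using assms unfolding meshed_def by blast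

lemma d_ge2: assumes "x \<in> V" "y \<in> V" "x \<noteq> y" "\<not> E x y" "d x y \<le> 2" shows "d x y = 2"
proof -
  have "d x y \<noteq> 0" using d0 assms by blast
  moreover have "d x y \<noteq> 1" using d1 assms by blast
  ultimately show ?thesis using assms by linarith
qed

lemma TC: assumes M: "meshed V E" and v: "v \<in> V"
  shows "E x y \<Longrightarrow> d v x = k \<Longrightarrow> d v y = k \<Longrightarrow> k \<ge> 1 \<Longrightarrow> \<exists>w. E x w \<and> E y w \<and> d v w = k - 1"
proof (induction k arbitrary: x y rule: less_induct)
  case (less k)
  have xV: "x \<in> V" "y \<in> V" using EV less.prems by auto
  show ?case
  proof (cases "k = 1")
    case True
    then have "E v x" "E v y" using d1 v xV less.prems by auto
    then show ?thesis using Esym d_refl v True by auto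
  next
    case False
    then have k2: "k \<ge> 2" using less.prems by linarith
    obtain x1 where x1: "E x x1" "d x1 v = k - 1" using step[of x v "k - 1"] dsym v xV less.prems k2 by auto
    have x1V: "x1 \<in> V" using EV x1 by blast
    have dx1: "d v x1 = k - 1" using x1 dsym v x1V by metis
    show ?thesis
    proof (cases "E x1 y")
      case True then show ?thesis using x1 dx1 Esym by blast
    next
      case False
      have "x1 \<noteq> y" using dx1 less.prems k2 by auto
      moreover have "d x1 y \<le> 2" using tri[of x1 x y] dE x1 less.prems Esym x1V xV by fastforce
      ultimately have d12: "d x1 y = 2" using d_ge2 False x1V xV by blast
      obtain w where w: "w \<in> V" "E x1 w" "E y w" "2 * d v w \<le> d v x1 + d v y"
        using meshedD[OF M v x1V xV(2) d12] by blast
      have "d v y \<le> Suc (d v w)" using adj[of v y w] v w by blast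
      then have dw: "d v w = k - 1" using w dx1 less.prems k2 by linarith
      have "k - 1 < k" "1 \<le> k - 1" using k2 by auto
      from less.IH[OF this(1) w(2) dx1 dw this(2)]
      obtain c where c: "E x1 c" "E w c" "d v c = k - 1 - 1" by blast
      have cV: "c \<in> V" using c EV by blast
      have "d c x \<le> 2" using tri[of c x1 x] dE c x1 Esym cV x1V xV by fastforce
      moreover have "d v x \<le> d v c + d c x" using tri v cV xV by blast
      ultimately have dcx: "d c x = 2" using c less.prems k2 by linarith
      obtain e where e: "e \<in> V" "E c e" "E x e" "2 * d y e \<le> d y c + d y x"
        using meshedD[OF M xV(2) cV xV(1) dcx] by blast
      have "d y x = 1" using dE Esym less.prems by blast
      moreover have "d y c \<le> 2" using tri[of y w c] dE c w Esym cV xV by fastforce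
      ultimately have "d y e \<le> 1" using e by linarith
      moreover have "d y e \<noteq> 0"
      proof
        assume "d y e = 0"
        then have "e = y" using d0 e xV by blast
        then have "d v y \<le> Suc (d v c)" using adj2[of v c y] v e by blast
        then show False using c less.prems k2 by linarith
      qed
      ultimately have "E y e" using d1 e xV by (metis One_nat_def le_SucE le_zero_eq)
      moreover have "d v e = k - 1"
        using adj2[of v c e] adj2[of v e x] e v Esym c less.prems k2 by fastforce
      ultimately show ?thesis using e by blast
    qed
  qed
qed


lemma intI: "u \<in> V \<Longrightarrow> d a u + d u b = d a b \<Longrightarrow> u \<in> interval V E a b"
  by (simp add: interval_def)

lemma intD: "u \<in> interval V E a b \<Longrightarrow> u \<in> V \<and> d a u + d u b = d a b"
  by (simp add: interval_def)

lemma fwd: assumes M: "meshed V E" and T: "metric_triangle V E v x y" and dxy: "d x y = 2"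
  shows "d v x = 2 \<and> d v y = 2 \<and> (\<exists>z\<in>V. E x z \<and> E y z \<and> d v z = 2)"
proof -
  have V: "v \<in> V" "x \<in> V" "y \<in> V" using T unfolding metric_triangle_def by auto
  have A: "interval V E v x \<inter> interval V E v y = {v}"
   and B: "interval V E v x \<inter> interval V E x y = {x}"
   and C: "interval V E v y \<inter> interval V E x y = {y}"
    using T unfolding metric_triangle_def by auto
  have K: "d v x \<le> d v z \<and> d v y \<le> d v z" if z: "E x z" "E y z" for z
  proof -
    have zV: "z \<in> V" using EV z by blast
    have "E z y" by (rule Esym[OF z(2)])
    then have "d x z = 1" "d z y = 1" using dE[OF z(1)] dE by blast+
    then have zI: "z \<in> interval V E x y" using zV dxy by (auto simp: interval_def)
    have "z \<noteq> x" "z \<noteq> y" using z Eirr by auto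
    have 1: "d v x \<le> d v z"
    proof (rule ccontr)
      assume nle: "\<not> d v x \<le> d v z"
      have Ez: "E z x" by (rule Esym[OF z(1)])
      have "d v x \<le> Suc (d v z)" by (rule adj2[OF V(1) Ez])
      moreover have "d z x = 1" by (rule dE[OF Ez])
      ultimately have "d v z + d z x = d v x" using nle by linarith
      then have "z \<in> interval V E v x" using zV by (simp add: interval_def)
      then have "z \<in> interval V E v x \<inter> interval V E x y" using zI by blast
      then have "z \<in> {x}" by (subst B[symmetric])
      then have "z = x" by simp
      with \<open>z \<noteq> x\<close> show False by contradiction
    qed
    have 2: "d v y \<le> d v z"
    proof (rule ccontr)
      assume nle: "\<not> d v y \<le> d v z"
      have Ez: "E z y" by (rule Esym[OF z(2)])
      have "d v y \<le> Suc (d v z)" by (rule adj2[OF V(1) Ez])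
      moreover have "d z y = 1" by (rule dE[OF Ez])
      ultimately have "d v z + d z y = d v y" using nle by linarith
      then have "z \<in> interval V E v y" using zV by (simp add: interval_def)
      then have "z \<in> interval V E v y \<inter> interval V E x y" using zI by blast
      then have "z \<in> {y}" by (subst C[symmetric])
      then have "z = y" by simp
      with \<open>z \<noteq> y\<close> show False by contradiction
    qed
    show ?thesis using 1 2 by blast
  qed
  obtain z0 where z0: "z0 \<in> V" "E x z0" "E y z0" "2 * d v z0 \<le> d v x + d v y"
    using meshedD[OF M V dxy] by blast
  from K[OF z0(2,3)] z0(4) have eq: "d v x = d v z0" "d v y = d v z0" by linarith+
  define k where "k = d v x"
  have k0: "k \<noteq> 0"
  proof
    assume "k = 0"
    then have vx: "v = x" using d0[OF V(1,2)] k_def by simp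
    have "d x x = 0" using d_refl V by blast
    then have "x \<in> interval V E v y" "x \<in> interval V E x y" using V vx unfolding interval_def by auto
    then have "x \<in> interval V E v y \<inter> interval V E x y" by blast
    then have "x \<in> {y}" by (subst C[symmetric])
    then have "x = y" by simp
    then have "d x y = 0" using d_refl V by simp
    then show False using dxy by simp
  qed
  have k1: "k \<noteq> 1"
  proof
    assume k1: "k = 1"
    have Evx: "E v x" using d1[OF V(1,2)] k_def k1 by simp
    have Evy: "E v y" using d1[OF V(1,3)] eq k_def k1 by simp
    have "E x v" using Esym Evx by blast
    then have "d x v = 1" "d v y = 1" using dE Evy by blast+
    then have "v \<in> interval V E x y" using V dxy unfolding interval_def by auto
    moreover have "v \<in> interval V E v x" using V d_refl unfolding interval_def by auto
    ultimately have "v \<in> interval V E v x \<inter> interval V E x y" by blast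
    then have "v \<in> {x}" by (subst B[symmetric])
    then have "v = x" by simp
    then show False using Evx Eirr by blast
  qed
  have k3: "\<not> k \<ge> 3"
  proof
    assume k3: "k \<ge> 3"
    have "d v x = k" "d v z0 = k" "1 \<le> k" using eq k_def k3 by auto
    from TC[OF M V(1) z0(2) this]
    obtain a where a: "E x a" "E z0 a" "d v a = k - 1" by blast
    have aV: "a \<in> V" using EV a by blast
    have "a \<noteq> y" using a eq k_def k3 by auto
    have "\<not> E a y"
    proof
      assume "E a y"
      then have "d x a = 1" "d a y = 1" using dE a by blast+
      then have "a \<in> interval V E x y" using aV dxy by (auto simp: interval_def)
      moreover have "d a x = 1" using a dE Esym by blast
      then have "d v a + d a x = d v x" using a k_def k3 by linarith
      then have "a \<in> interval V E v x" using aV by (simp add: interval_def)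
      ultimately have "a \<in> interval V E v x \<inter> interval V E x y" by blast
      then have "a \<in> {x}" by (subst B[symmetric])
      then have "a = x" by simp
      then show False using a Eirr by blast
    qed
    moreover have "d a z0 = 1" "d z0 y = 1" using dE a z0 Esym by blast+
    then have "d a y \<le> 2" using tri[of a z0 y] EV z0 aV V by linarith
    ultimately have day: "d a y = 2" using d_ge2 \<open>a \<noteq> y\<close> aV V by blast
    obtain w where w: "w \<in> V" "E a w" "E y w" "2 * d v w \<le> d v a + d v y"
      using meshedD[OF M V(1) aV V(3) day] by blast
    have "d v y \<le> Suc (d v w)" using adj[of v y w] V w by blast
    then have dw: "d v w = k - 1" using w a eq k_def k3 by linarith
    have "1 \<le> k - 1" using k3 by auto
    from TC[OF M V(1) w(2) a(3) dw this]
    obtain c where c: "E a c" "E w c" "d v c = k - 1 - 1" by blast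
    have cV: "c \<in> V" using EV c by blast
    have "d c a = 1" "d a x = 1" using dE a c Esym by blast+
    then have "d c x \<le> 2" using tri[of c a x] cV aV V by linarith
    moreover have "d v x \<le> d v c + d c x" using tri V cV by blast
    ultimately have "d v c + d c x = d v x" using c k_def k3 by linarith
    then have cx: "c \<in> interval V E v x" using cV by (simp add: interval_def)
    have "d c w = 1" "d w y = 1" using dE w c Esym by blast+
    then have "d c y \<le> 2" using tri[of c w y] cV w V by linarith
    moreover have "d v y \<le> d v c + d c y" using tri V cV by blast
    ultimately have "d v c + d c y = d v y" using c k_def eq k3 by linarith
    then have "c \<in> interval V E v y" using cV by (simp add: interval_def)
    then have "c \<in> interval V E v x \<inter> interval V E v y" using cx by blast
    then have "c \<in> {v}" by (subst A[symmetric])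
    then have "c = v" by simp
    then have "d v c = 0" using d_refl V by simp
    then show False using c k3 by simp
  qed
  have "k = 2" using k0 k1 k3 by linarith
  then show ?thesis using eq k_def z0 by auto
qed


lemma int_sym: assumes "a \<in> V" "b \<in> V" shows "interval V E a b = interval V E b a"
  unfolding interval_def using dsym assms by auto

lemma one_side: assumes V: "v \<in> V" "x \<in> V" "y \<in> V" and dxy: "d x y = 2"
  and u: "u \<in> interval V E v x" "u \<in> interval V E x y" "u \<noteq> x"
  shows "\<exists>z\<in>V. E x z \<and> E y z \<and> 2 * d v z \<le> d v x + d v y"
proof -
  have uV: "u \<in> V" and u1: "d v u + d u x = d v x" and u2: "d x u + d u y = 2"
    using u dxy unfolding interval_def by auto
  have "d x u \<noteq> 0" using d0 uV V u(3) by metis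
  have tr: "d v x \<le> d v y + d y x" using tri V by blast
  have dyx: "d y x = 2" using dsym V dxy by metis
  have dux: "d u x = d x u" using dsym uV V by metis
  show ?thesis
  proof (cases "d x u = 1")
    case True
    then have "E x u" using d1 V uV by blast
    moreover have "d u y = 1" using True u2 by linarith
    then have "E u y" using d1 V uV by blast
    then have "E y u" using Esym by blast
    moreover have "2 * d v u \<le> d v x + d v y" using u1 dux True tr dyx by linarith
    ultimately show ?thesis using uV by blast
  next
    case False
    then have "d x u = 2" "d u y = 0" using u2 \<open>d x u \<noteq> 0\<close> by linarith+
    then have "u = y" using d0 uV V by blast
    then have l: "d v y + 2 = d v x" using u1 dux \<open>d x u = 2\<close> by simp
    obtain z where z: "E x z" "E z y" using d2 V dxy by blast
    have zV: "z \<in> V" using EV z by blast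
    have "d v z \<le> Suc (d v y)" using adj[OF V(1) z(2)] .
    then have "2 * d v z \<le> d v x + d v y" using l by linarith
    moreover have "E y z" using Esym z by blast
    ultimately show ?thesis using z zV by blast
  qed
qed

lemma concat: assumes V: "v \<in> V" "x \<in> V" and v': "v' \<in> interval V E v x"
  and u: "u \<in> interval V E v' x"
  shows "u \<in> interval V E v x \<and> d v u = d v v' + d v' u"
proof -
  have v'V: "v' \<in> V" and e1: "d v v' + d v' x = d v x" using v' unfolding interval_def by auto
  have uV: "u \<in> V" and e2: "d v' u + d u x = d v' x" using u unfolding interval_def by auto
  have "d v u \<le> d v v' + d v' u" using tri V v'V uV by blast
  moreover have "d v x \<le> d v u + d u x" using tri V uV by blast
  ultimately have "d v u = d v v' + d v' u" "d v u + d u x = d v x" using e1 e2 by linarith+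
  then show ?thesis using uV unfolding interval_def by auto
qed

lemma bwd: assumes H: "\<forall>v x y. metric_triangle V E v x y \<and> d x y = 2 \<longrightarrow>
       d v x = 2 \<and> d v y = 2 \<and> (\<exists>z\<in>V. E x z \<and> E y z \<and> d v z = 2)"
  shows "meshed V E"
  unfolding meshed_def
proof (intro ballI impI)
  fix v x y assume V: "v \<in> V" "x \<in> V" "y \<in> V" and dxy: "d x y = 2"
  show "\<exists>z\<in>V. E x z \<and> E y z \<and> 2 * d v z \<le> d v x + d v y"
  proof (cases "\<exists>u. u \<in> interval V E v x \<and> u \<in> interval V E x y \<and> u \<noteq> x")
    case True
    then obtain u where "u \<in> interval V E v x" "u \<in> interval V E x y" "u \<noteq> x" by blast
    then show ?thesis using one_side[OF V dxy] by blast
  next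
    case F1: False
    show ?thesis
    proof (cases "\<exists>u. u \<in> interval V E v y \<and> u \<in> interval V E y x \<and> u \<noteq> y")
      case True
      then obtain u where "u \<in> interval V E v y" "u \<in> interval V E y x" "u \<noteq> y" by blast
      moreover have "d y x = 2" using dsym V dxy by metis
      ultimately obtain z where "z \<in> V" "E y z" "E x z" "2 * d v z \<le> d v y + d v x"
        using one_side[OF V(1) V(3) V(2)] by blast
      then show ?thesis by auto
    next
      case F2: False
      have F2': "u \<in> interval V E v y \<Longrightarrow> u \<in> interval V E x y \<Longrightarrow> u = y" for u
        using F2 int_sym V by blast
      define S where "S = interval V E v x \<inter> interval V E v y"
      have finS: "finite S" using finV unfolding S_def interval_def by auto
      have vS: "v \<in> S" using V d_refl unfolding S_def interval_def by auto
      define m where "m = Max (d v ` S)"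
      have "m \<in> d v ` S" using finS vS unfolding m_def by (intro Max_in) auto
      then obtain v' where v': "v' \<in> S" "d v v' = m" by blast
      have mx: "d v u \<le> d v v'" if "u \<in> S" for u
        using finS that v' unfolding m_def by (simp add: Max_ge)
      have v'x: "v' \<in> interval V E v x" and v'y: "v' \<in> interval V E v y" using v' S_def by auto
      have v'V: "v' \<in> V" using v'x unfolding interval_def by auto
      have T: "metric_triangle V E v' x y"
        unfolding metric_triangle_def
      proof (intro conjI)
        show "v' \<in> V" "x \<in> V" "y \<in> V" using v'V V by auto
        show "interval V E v' x \<inter> interval V E v' y = {v'}"
        proof
          show "{v'} \<subseteq> interval V E v' x \<inter> interval V E v' y"
            using v'V V d_refl unfolding interval_def by auto
          show "interval V E v' x \<inter> interval V E v' y \<subseteq> {v'}"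
          proof
            fix u assume "u \<in> interval V E v' x \<inter> interval V E v' y"
            then have ux: "u \<in> interval V E v' x" and uy: "u \<in> interval V E v' y" by auto
            from concat[OF V(1) V(2) v'x ux] concat[OF V(1) V(3) v'y uy]
            have "u \<in> S" "d v u = d v v' + d v' u" unfolding S_def by auto
            then have "d v' u = 0" using mx by fastforce
            moreover have "u \<in> V" using ux unfolding interval_def by auto
            ultimately have "v' = u" using d0 v'V by blast
            then show "u \<in> {v'}" by simp
          qed
        qed
        show "interval V E v' x \<inter> interval V E x y = {x}"
        proof
          show "{x} \<subseteq> interval V E v' x \<inter> interval V E x y"
            using v'V V d_refl dxy unfolding interval_def by auto
          show "interval V E v' x \<inter> interval V E x y \<subseteq> {x}"
          proof
            fix u assume "u \<in> interval V E v' x \<inter> interval V E x y"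
            then have ux: "u \<in> interval V E v' x" and uxy: "u \<in> interval V E x y" by auto
            from concat[OF V(1) V(2) v'x ux] have "u \<in> interval V E v x" by blast
            then have "u = x" using F1 uxy by blast
            then show "u \<in> {x}" by simp
          qed
        qed
        show "interval V E v' y \<inter> interval V E x y = {y}"
        proof
          show "{y} \<subseteq> interval V E v' y \<inter> interval V E x y"
            using v'V V d_refl dxy unfolding interval_def by auto
          show "interval V E v' y \<inter> interval V E x y \<subseteq> {y}"
          proof
            fix u assume "u \<in> interval V E v' y \<inter> interval V E x y"
            then have uy: "u \<in> interval V E v' y" and uxy: "u \<in> interval V E x y" by auto
            from concat[OF V(1) V(3) v'y uy] have "u \<in> interval V E v y" by blast
            then have "u = y" using F2' uxy by blast
            then show "u \<in> {y}" by simp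
          qed
        qed
      qed
      from H T dxy have r: "d v' x = 2" "d v' y = 2" and "\<exists>z\<in>V. E x z \<and> E y z \<and> d v' z = 2" by blast+
      then obtain z where z: "z \<in> V" "E x z" "E y z" "d v' z = 2" by blast
      have "d v z \<le> d v v' + d v' z" using tri V v'V z by blast
      moreover have "d v v' + d v' x = d v x" "d v v' + d v' y = d v y" using v'x v'y unfolding interval_def by auto
      ultimately have "2 * d v z \<le> d v x + d v y" using r z by linarith
      then show ?thesis using z by blast
    qed
  qed
qed

end

theorem mainTheorem1:
  fixes V :: "'a set" and E :: "'a \<Rightarrow> 'a \<Rightarrow> bool"
  assumes "simple_graph V E" and "connected_graph V E"
  shows "meshed V E \<longleftrightarrow>
    (\<forall>v x y. metric_triangle V E v x y \<and> gdist V E x y = 2 \<longrightarrow>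
       gdist V E v x = 2 \<and> gdist V E v y = 2 \<and>
       (\<exists>z\<in>V. E x z \<and> E y z \<and> gdist V E v z = 2))"
proof -
  interpret sgr V E using assms by unfold_locales
  show ?thesis using fwd bwd by blast
qed

end
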